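(* Let $(Q,M)$ be a two-dimensional random vector with $M\in\{-1,1\}$ almost surely and $M$ not almost surely constant (equivalently $E\ln|M|=0$, $E|M|=1$, $M$ non-degenerate), and suppose $EQ^2<\infty$. Let $(Q_n,M_n)_{n\ge1}$ be i.i.d. copies of $(Q,M)$ and define $R_0=0$, $R_n=Q_n+M_nR_{n-1}$ for $n\ge1$. Then, as $n\to\infty$, $$\frac{R_n}{\sqrt n}\xrightarrow{d}\beta\mathcal N,$$ where $\beta^2=EQ^2+2\frac{EQ}{1-EM}E(QM)$ and $\mathcal N$ is a standard normal random variable.
   Context: $\xrightarrow{d}$ denotes convergence in distribution. Note $-1<EM<1$ under the assumptions. *)

theory Defs
  imports "HOL-Probability.Probability"
begin

text \<open>Random coefficient recursion: R 0 = 0, R (n+1) = Q (n+1) + M (n+1) * R n.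
  The i.i.d. copies are indexed by positive naturals (index 0 is unused).\<close>
fun perp_R :: "(nat \<Rightarrow> 'a \<Rightarrow> real) \<Rightarrow> (nat \<Rightarrow> 'a \<Rightarrow> real) \<Rightarrow> nat \<Rightarrow> 'a \<Rightarrow> real" where
  "perp_R Qs Ms 0 x = 0"
| "perp_R Qs Ms (Suc n) x = Qs (Suc n) x + Ms (Suc n) x * perp_R Qs Ms n x"

definition scaled_std_normal :: "real \<Rightarrow> real measure" where
  "scaled_std_normal \<beta> = distr (density lborel std_normal_density) borel (\<lambda>x. \<beta> * x)"

end

theory Submission imports Defs "HOL-Real_Asymp.Real_Asymp" begin

lemma step_abstract:
  fixes W U V :: "'a \<Rightarrow> real" and P :: "'a measure"
  assumes "prob_space P"
    and ind: "prob_space.indep_var P (borel \<Otimes>\<^sub>M borel) (\<lambda>\<omega>. (W \<omega>, 0::real)) (borel \<Otimes>\<^sub>M borel) (\<lambda>\<omega>. (U \<omega>, V \<omega>))"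
    and U: "AE \<omega> in P. U \<omega> = 1 \<or> U \<omega> = -1"
    and e1: "norm ((\<integral>\<omega>. iexp (s * W \<omega>) \<partial>P) - \<psi>) \<le> e"
    and e2: "norm ((\<integral>\<omega>. iexp (- s * W \<omega>) \<partial>P) - \<psi>) \<le> e"
  shows "norm ((\<integral>\<omega>. iexp (s * (U \<omega> * W \<omega> + V \<omega>)) \<partial>P) - \<psi> * (\<integral>\<omega>. iexp (s * V \<omega>) \<partial>P)) \<le> e"
proof -
  interpret prob_space P by fact
  have rvW: "(\<lambda>\<omega>. (W \<omega>, 0::real)) \<in> measurable P (borel \<Otimes>\<^sub>M borel)" using ind by (rule indep_var_rv1)
  have rvUV: "(\<lambda>\<omega>. (U \<omega>, V \<omega>)) \<in> measurable P (borel \<Otimes>\<^sub>M borel)" using ind by (rule indep_var_rv2)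
  have [measurable]: "W \<in> borel_measurable P"
    using measurable_compose[OF rvW measurable_fst] by simp
  have [measurable]: "U \<in> borel_measurable P"
    using measurable_compose[OF rvUV measurable_fst] by simp
  have [measurable]: "V \<in> borel_measurable P"
    using measurable_compose[OF rvUV measurable_snd] by simp
  define A where "A \<omega> = complex_of_real ((1 + U \<omega>)/2) * iexp (s * V \<omega>)" for \<omega>
  define B where "B \<omega> = complex_of_real ((1 - U \<omega>)/2) * iexp (s * V \<omega>)" for \<omega>
  have [measurable]: "A \<in> borel_measurable P" "B \<in> borel_measurable P"
    unfolding A_def B_def by measurable
  have intA: "integrable P A" unfolding A_def
    apply (rule integrable_const_bound[where B=1])
    using U apply eventually_elim apply (auto simp: norm_mult)
    done
  have intB: "integrable P B" unfolding B_def
    apply (rule integrable_const_bound[where B=1])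
    using U apply eventually_elim apply (auto simp: norm_mult)
    done
  have ind1: "indep_var borel (\<lambda>\<omega>. iexp (s * W \<omega>)) borel A"
    using indep_var_compose[OF ind, of "\<lambda>z. iexp (s * fst z)" borel "\<lambda>z. complex_of_real ((1 + fst z)/2) * iexp (s * snd z)" borel]
    by (simp add: comp_def A_def[abs_def])
  have ind2: "indep_var borel (\<lambda>\<omega>. iexp (- s * W \<omega>)) borel B"
    using indep_var_compose[OF ind, of "\<lambda>z. iexp (- s * fst z)" borel "\<lambda>z. complex_of_real ((1 - fst z)/2) * iexp (s * snd z)" borel]
    by (simp add: comp_def B_def[abs_def])
  have int1: "integrable P (\<lambda>\<omega>. iexp (c * W \<omega>))" for c
    by (rule integrable_const_bound[where B=1]) auto
  have "(\<integral>\<omega>. iexp (s * (U \<omega> * W \<omega> + V \<omega>)) \<partial>P) = (\<integral>\<omega>. iexp (s * W \<omega>) * A \<omega> + iexp (- s * W \<omega>) * B \<omega> \<partial>P)"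
  proof (rule integral_cong_AE)
    show "AE \<omega> in P. iexp (s * (U \<omega> * W \<omega> + V \<omega>)) = iexp (s * W \<omega>) * A \<omega> + iexp (- s * W \<omega>) * B \<omega>"
      using U apply eventually_elim
      by (auto simp: A_def B_def algebra_simps exp_add[symmetric])
  qed auto
  also have "\<dots> = (\<integral>\<omega>. iexp (s * W \<omega>) \<partial>P) * integral\<^sup>L P A + (\<integral>\<omega>. iexp (- s * W \<omega>) \<partial>P) * integral\<^sup>L P B"
    apply (subst Bochner_Integration.integral_add)
      apply (rule indep_var_integrable[OF ind1 int1 intA])
     apply (rule indep_var_integrable[OF ind2 int1 intB])
    apply (subst indep_var_lebesgue_integral[OF ind1 int1 intA])
    apply (subst indep_var_lebesgue_integral[OF ind2 int1 intB])
    apply (rule refl)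
    done
  finally have eq1: "(\<integral>\<omega>. iexp (s * (U \<omega> * W \<omega> + V \<omega>)) \<partial>P) = (\<integral>\<omega>. iexp (s * W \<omega>) \<partial>P) * integral\<^sup>L P A + (\<integral>\<omega>. iexp (- s * W \<omega>) \<partial>P) * integral\<^sup>L P B" .
  have AB: "A \<omega> + B \<omega> = iexp (s * V \<omega>)" for \<omega>
  proof -
    have "A \<omega> + B \<omega> = complex_of_real ((1 + U \<omega>)/2 + (1 - U \<omega>)/2) * iexp (s * V \<omega>)"
      unfolding A_def B_def by (simp only: distrib_right of_real_add)
    also have "(1 + U \<omega>)/2 + (1 - U \<omega>)/2 = 1" by (simp add: field_simps)
    finally show ?thesis by simp
  qed
  have eq2: "(\<integral>\<omega>. iexp (s * V \<omega>) \<partial>P) = integral\<^sup>L P A + integral\<^sup>L P B"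
    by (subst Bochner_Integration.integral_add[OF intA intB, symmetric]) (simp add: AB)
  have nA: "norm (integral\<^sup>L P A) \<le> (\<integral>\<omega>. \<bar>1 + U \<omega>\<bar> / 2 \<partial>P)"
    using integral_norm_bound[of P A] unfolding A_def norm_mult norm_of_real by simp
  have nB: "norm (integral\<^sup>L P B) \<le> (\<integral>\<omega>. \<bar>1 - U \<omega>\<bar> / 2 \<partial>P)"
    using integral_norm_bound[of P B] unfolding B_def norm_mult norm_of_real by simp
  have intUa: "integrable P (\<lambda>\<omega>. \<bar>1 + U \<omega>\<bar> / 2)" "integrable P (\<lambda>\<omega>. \<bar>1 - U \<omega>\<bar> / 2)"
     apply (rule integrable_const_bound[where B=1])
    using U apply eventually_elim apply auto[1] apply simp
     apply (rule integrable_const_bound[where B=1])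
    using U apply eventually_elim apply auto[1] apply simp
    done
  have sum1: "(\<integral>\<omega>. \<bar>1 + U \<omega>\<bar> / 2 \<partial>P) + (\<integral>\<omega>. \<bar>1 - U \<omega>\<bar> / 2 \<partial>P) = 1"
    apply (subst Bochner_Integration.integral_add[OF intUa, symmetric])
    apply (subst integral_cong_AE[where g="\<lambda>_. 1"])
    using U apply (auto elim!: eventually_mono simp: prob_space)
    done
  have e0: "0 \<le> e" using e1 norm_ge_zero order.trans by blast
  have "norm ((\<integral>\<omega>. iexp (s * (U \<omega> * W \<omega> + V \<omega>)) \<partial>P) - \<psi> * (\<integral>\<omega>. iexp (s * V \<omega>) \<partial>P))
      = norm (((\<integral>\<omega>. iexp (s * W \<omega>) \<partial>P) - \<psi>) * integral\<^sup>L P A + ((\<integral>\<omega>. iexp (- s * W \<omega>) \<partial>P) - \<psi>) * integral\<^sup>L P B)"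
    unfolding eq1 eq2 by (simp add: algebra_simps)
  also have "\<dots> \<le> e * norm (integral\<^sup>L P A) + e * norm (integral\<^sup>L P B)"
    apply (rule order.trans[OF norm_triangle_ineq])
    apply (rule add_mono; simp add: norm_mult; rule mult_right_mono)
    using e1 e2 by auto
  also have "\<dots> \<le> e * (\<integral>\<omega>. \<bar>1 + U \<omega>\<bar> / 2 \<partial>P) + e * (\<integral>\<omega>. \<bar>1 - U \<omega>\<bar> / 2 \<partial>P)"
    by (intro add_mono mult_left_mono nA nB e0)
  also have "\<dots> = e" using sum1 by (metis distrib_left mult.right_neutral)
  finally show ?thesis .
qed

definition wfun :: "real \<Rightarrow> real \<times> real \<Rightarrow> real" where
  "wfun c z = fst z - c * (1 - snd z)"
definition Uf :: "nat \<Rightarrow> nat \<Rightarrow> (nat \<Rightarrow> real \<times> real) \<Rightarrow> real" where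
  "Uf n k f = (\<Prod>i\<in>{Suc k..n}. snd (f i))"
definition Vf :: "real \<Rightarrow> nat \<Rightarrow> nat \<Rightarrow> (nat \<Rightarrow> real \<times> real) \<Rightarrow> real" where
  "Vf c n j f = (\<Sum>k\<in>{j..n}. wfun c (f k) * Uf n k f)"

lemma Vf_step: "j \<le> n \<Longrightarrow> Vf c n j f = wfun c (f j) * Uf n j f + Vf c n (Suc j) f"
  unfolding Vf_def by (simp add: sum.atLeast_Suc_atMost)

lemma Vf_empty: "Vf c n (Suc n) f = 0"
  unfolding Vf_def by simp

lemma Uf_restrict: "{Suc k..n} \<subseteq> S \<Longrightarrow> Uf n k (restrict f S) = Uf n k f"
  unfolding Uf_def by (intro prod.cong) auto

lemma Vf_restrict: assumes "{j..n} \<subseteq> S" shows "Vf c n j (restrict f S) = Vf c n j f"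
  unfolding Vf_def
proof (intro sum.cong refl)
  fix k assume k: "k \<in> {j..n}"
  then have "{Suc k..n} \<subseteq> S" "k \<in> S" using assms by auto
  then show "wfun c (restrict f S k) * Uf n k (restrict f S) = wfun c (f k) * Uf n k f"
    by (simp add: Uf_restrict)
qed

lemma comp_snd: "i \<in> S \<Longrightarrow> (\<lambda>f. snd (f i)) \<in> borel_measurable (PiM S (\<lambda>_. borel \<Otimes>\<^sub>M borel :: (real \<times> real) measure))"
  by measurable
lemma comp_fst: "i \<in> S \<Longrightarrow> (\<lambda>f. fst (f i)) \<in> borel_measurable (PiM S (\<lambda>_. borel \<Otimes>\<^sub>M borel :: (real \<times> real) measure))"
  by measurable

lemma wfun_meas: "i \<in> S \<Longrightarrow> (\<lambda>f. wfun c (f i)) \<in> borel_measurable (PiM S (\<lambda>_. borel \<Otimes>\<^sub>M borel :: (real \<times> real) measure))"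
  unfolding wfun_def by measurable

lemma Uf_meas: "{Suc k..n} \<subseteq> S \<Longrightarrow> Uf n k \<in> borel_measurable (PiM S (\<lambda>_. borel \<Otimes>\<^sub>M borel))"
  unfolding Uf_def
  apply (rule borel_measurable_prod)
  apply (rule comp_snd)
  by auto

lemma Vf_meas: "{j..n} \<subseteq> S \<Longrightarrow> Vf c n j \<in> borel_measurable (PiM S (\<lambda>_. borel \<Otimes>\<^sub>M borel))"
  unfolding Vf_def
  apply (rule borel_measurable_sum)
  apply (rule borel_measurable_times)
   apply (unfold wfun_def)
   apply (rule borel_measurable_diff)
    apply (rule comp_fst) apply auto[1]
   apply (rule borel_measurable_times) apply simp
   apply (rule borel_measurable_diff) apply simp
    apply (rule comp_snd) apply auto[1]
  apply (rule Uf_meas) apply auto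
  done

lemma prod_pm1: "finite S \<Longrightarrow> (\<forall>i\<in>S. g i = (1::real) \<or> g i = -1) \<Longrightarrow> prod g S = 1 \<or> prod g S = -1"
  by (induction S rule: finite_induct) auto

lemma telescope:
  fixes X :: "nat \<Rightarrow> 'a \<Rightarrow> real \<times> real" and P :: "'a measure"
  assumes "prob_space P"
   and ind: "prob_space.indep_vars P (\<lambda>_. borel \<Otimes>\<^sub>M borel) X {1..}"
   and pm: "\<And>i. i \<ge> 1 \<Longrightarrow> AE \<omega> in P. snd (X i \<omega>) = 1 \<or> snd (X i \<omega>) = -1"
   and e1: "\<And>i. i \<ge> 1 \<Longrightarrow> norm ((\<integral>\<omega>. iexp (s * wfun c (X i \<omega>)) \<partial>P) - \<psi>) \<le> e"
   and e2: "\<And>i. i \<ge> 1 \<Longrightarrow> norm ((\<integral>\<omega>. iexp (- s * wfun c (X i \<omega>)) \<partial>P) - \<psi>) \<le> e"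
   and psi: "norm \<psi> \<le> 1"
  shows "j \<ge> 1 \<Longrightarrow> j + d = Suc n \<Longrightarrow> norm ((\<integral>\<omega>. iexp (s * Vf c n j (\<lambda>i. X i \<omega>)) \<partial>P) - \<psi>^d) \<le> d * e"
proof (induction d arbitrary: j)
  case 0
  interpret prob_space P by fact
  from 0 have "j = Suc n" by simp
  then show ?case by (simp add: Vf_empty prob_space)
next
  case (Suc d)
  interpret prob_space P by fact
  from Suc.prems have jn: "j \<le> n" by simp
  have IH: "norm ((\<integral>\<omega>. iexp (s * Vf c n (Suc j) (\<lambda>i. X i \<omega>)) \<partial>P) - \<psi>^d) \<le> d * e"
    using Suc by simp
  have ind2: "indep_var (PiM {j} (\<lambda>_. borel \<Otimes>\<^sub>M borel)) (\<lambda>\<omega>. restrict (\<lambda>i. X i \<omega>) {j})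
     (PiM {Suc j..n} (\<lambda>_. borel \<Otimes>\<^sub>M borel)) (\<lambda>\<omega>. restrict (\<lambda>i. X i \<omega>) {Suc j..n})"
    by (rule indep_var_restrict[OF ind]) (use Suc.prems in auto)
  have m1: "(\<lambda>f. (wfun c (f j), 0::real)) \<in> measurable (PiM {j} (\<lambda>_. borel \<Otimes>\<^sub>M borel)) (borel \<Otimes>\<^sub>M borel)"
    unfolding wfun_def
    apply (rule measurable_Pair)
     apply (rule borel_measurable_diff)
      apply (rule comp_fst) apply auto[1]
     apply (rule borel_measurable_times) apply simp
     apply (rule borel_measurable_diff) apply simp
     apply (rule comp_snd) apply auto[1]
    apply simp
    done
  have m2: "(\<lambda>f. (Uf n j f, Vf c n (Suc j) f)) \<in> measurable (PiM {Suc j..n} (\<lambda>_. borel \<Otimes>\<^sub>M borel)) (borel \<Otimes>\<^sub>M borel)"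
    by (rule measurable_Pair) (auto intro!: Uf_meas Vf_meas)
  have ind3: "indep_var (borel \<Otimes>\<^sub>M borel) (\<lambda>\<omega>. (wfun c (X j \<omega>), 0::real))
     (borel \<Otimes>\<^sub>M borel) (\<lambda>\<omega>. (Uf n j (\<lambda>i. X i \<omega>), Vf c n (Suc j) (\<lambda>i. X i \<omega>)))"
    using indep_var_compose[OF ind2 m1 m2] by (simp add: comp_def Uf_restrict Vf_restrict)
  have AEU: "AE \<omega> in P. Uf n j (\<lambda>i. X i \<omega>) = 1 \<or> Uf n j (\<lambda>i. X i \<omega>) = -1"
  proof -
    have "AE \<omega> in P. \<forall>i\<in>{Suc j..n}. snd (X i \<omega>) = 1 \<or> snd (X i \<omega>) = -1"
      by (rule eventually_ball_finite) (use pm Suc.prems in auto)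
    then show ?thesis
      apply eventually_elim unfolding Uf_def by (rule prod_pm1) auto
  qed
  have st: "norm ((\<integral>\<omega>. iexp (s * (Uf n j (\<lambda>i. X i \<omega>) * wfun c (X j \<omega>) + Vf c n (Suc j) (\<lambda>i. X i \<omega>))) \<partial>P)
      - \<psi> * (\<integral>\<omega>. iexp (s * Vf c n (Suc j) (\<lambda>i. X i \<omega>)) \<partial>P)) \<le> e"
    by (rule step_abstract[OF \<open>prob_space P\<close> ind3 AEU e1 e2]) (use Suc.prems in auto)
  have eqV: "Vf c n j (\<lambda>i. X i \<omega>) = Uf n j (\<lambda>i. X i \<omega>) * wfun c (X j \<omega>) + Vf c n (Suc j) (\<lambda>i. X i \<omega>)" for \<omega>
    using Vf_step[OF jn] by simp
  let ?E = "\<integral>\<omega>. iexp (s * Vf c n j (\<lambda>i. X i \<omega>)) \<partial>P"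
  let ?E' = "\<integral>\<omega>. iexp (s * Vf c n (Suc j) (\<lambda>i. X i \<omega>)) \<partial>P"
  have "norm (?E - \<psi>^Suc d) = norm ((?E - \<psi> * ?E') + \<psi> * (?E' - \<psi>^d))"
    by (simp add: algebra_simps)
  also have "\<dots> \<le> norm (?E - \<psi> * ?E') + norm \<psi> * norm (?E' - \<psi>^d)"
    by (rule order.trans[OF norm_triangle_ineq]) (simp add: norm_mult)
  also have "\<dots> \<le> e + 1 * (d * e)"
    apply (rule add_mono)
    using st apply (simp add: eqV)
    by (rule mult_mono[OF psi IH]) auto
  finally show ?case by (simp add: algebra_simps)
qed

lemma Uf_Suc: "k \<le> n \<Longrightarrow> Uf (Suc n) k f = snd (f (Suc n)) * Uf n k f"
  unfolding Uf_def by (subst prod.nat_ivl_Suc') auto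

lemma Vf_Suc: "Vf c (Suc n) 1 f = wfun c (f (Suc n)) + snd (f (Suc n)) * Vf c n 1 f"
proof -
  have "Vf c (Suc n) 1 f = wfun c (f (Suc n)) * Uf (Suc n) (Suc n) f + (\<Sum>k\<in>{1..n}. wfun c (f k) * Uf (Suc n) k f)"
    unfolding Vf_def by (subst sum.nat_ivl_Suc') auto
  also have "Uf (Suc n) (Suc n) f = 1" unfolding Uf_def by simp
  also have "(\<Sum>k\<in>{1..n}. wfun c (f k) * Uf (Suc n) k f) = snd (f (Suc n)) * Vf c n 1 f"
    unfolding Vf_def sum_distrib_left
    by (intro sum.cong refl) (simp add: Uf_Suc)
  finally show ?thesis by simp
qed

lemma perp_Vf: "perp_R Qs Ms n \<omega> = Vf c n 1 (\<lambda>i. (Qs i \<omega>, Ms i \<omega>)) + c * (1 - (\<Prod>i\<in>{1..n}. Ms i \<omega>))"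
proof (induction n)
  case 0
  then show ?case by (simp add: Vf_def)
next
  case (Suc n)
  have Pi: "(\<Prod>i\<in>{1..Suc n}. Ms i \<omega>) = Ms (Suc n) \<omega> * (\<Prod>i\<in>{1..n}. Ms i \<omega>)"
    by (subst prod.nat_ivl_Suc') auto
  have V: "Vf c (Suc n) 1 (\<lambda>i. (Qs i \<omega>, Ms i \<omega>)) = wfun c (Qs (Suc n) \<omega>, Ms (Suc n) \<omega>) + Ms (Suc n) \<omega> * Vf c n 1 (\<lambda>i. (Qs i \<omega>, Ms i \<omega>))"
    using Vf_Suc[of c n "\<lambda>i. (Qs i \<omega>, Ms i \<omega>)"] by (simp only: snd_conv)
  show ?case unfolding perp_R.simps Suc.IH V Pi wfun_def by (simp add: algebra_simps)
qed

lemma perp_meas: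
  assumes "\<And>i. i \<ge> 1 \<Longrightarrow> Qs i \<in> borel_measurable P" "\<And>i. i \<ge> 1 \<Longrightarrow> Ms i \<in> borel_measurable P"
  shows "perp_R Qs Ms n \<in> borel_measurable P"
proof (induction n)
  case 0
  then show ?case by simp
next
  case (Suc n)
  have "perp_R Qs Ms (Suc n) = (\<lambda>x. Qs (Suc n) x + Ms (Suc n) x * perp_R Qs Ms n x)" by (rule ext) simp
  then show ?case using Suc assms[of "Suc n"] by simp
qed

lemma iexp_diff_bound: "norm (iexp a - iexp b) \<le> \<bar>a - b\<bar>"
proof -
  have "iexp a - iexp b = iexp b * (iexp (a - b) - 1)"
    by (simp add: algebra_simps exp_add[symmetric])
  then have "norm (iexp a - iexp b) = norm (iexp (a - b) - 1)"
    by (simp add: norm_mult)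
  also have "\<dots> \<le> \<bar>a - b\<bar>" using iexp_approx1[of "a - b" 0] by simp
  finally show ?thesis .
qed

theorem theorem4:
  fixes P :: "'a measure"
    and Q M :: "'a \<Rightarrow> real"
    and Qs Ms :: "nat \<Rightarrow> 'a \<Rightarrow> real"
  assumes "prob_space P"
    and "Q \<in> borel_measurable P" and "M \<in> borel_measurable P"
    and M_pm1: "AE x in P. M x = -1 \<or> M x = 1"
    and M_nondeg: "\<not> (\<exists>c. AE x in P. M x = c)"
    and Q2: "integrable P (\<lambda>x. (Q x)\<^sup>2)"
    and indep: "prob_space.indep_vars P (\<lambda>_. borel \<Otimes>\<^sub>M borel) (\<lambda>n x. (Qs n x, Ms n x)) {1..}"
    and ident: "\<And>n. n \<ge> 1 \<Longrightarrow>
       distr P (borel \<Otimes>\<^sub>M borel) (\<lambda>x. (Qs n x, Ms n x)) = distr P (borel \<Otimes>\<^sub>M borel) (\<lambda>x. (Q x, M x))"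
  shows "weak_conv_m (\<lambda>n. distr P borel (\<lambda>x. perp_R Qs Ms n x / sqrt (real n)))
           (scaled_std_normal (sqrt ((\<integral>x. (Q x)\<^sup>2 \<partial>P)
              + 2 * (\<integral>x. Q x \<partial>P) / (1 - (\<integral>x. M x \<partial>P)) * (\<integral>x. Q x * M x \<partial>P))))"
proof -
  interpret prob_space P by fact
  define X where "X i \<omega> = (Qs i \<omega>, Ms i \<omega>)" for i \<omega>
  have indX: "indep_vars (\<lambda>_. borel \<Otimes>\<^sub>M borel) X {1..}"
    using indep unfolding X_def[abs_def] .
  have Xm: "X i \<in> measurable P (borel \<Otimes>\<^sub>M borel)" if "i \<ge> 1" for i
    using indX that unfolding indep_vars_def by auto
  have Qsm: "Qs i \<in> borel_measurable P" if "i \<ge> 1" for i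
    using measurable_compose[OF Xm[OF that] measurable_fst] by (simp add: X_def)
  have Msm: "Ms i \<in> borel_measurable P" if "i \<ge> 1" for i
    using measurable_compose[OF Xm[OF that] measurable_snd] by (simp add: X_def)
  have Qm[measurable]: "Q \<in> borel_measurable P" and Mm[measurable]: "M \<in> borel_measurable P"
    using assms(2,3) .
  have QMm: "(\<lambda>\<omega>. (Q \<omega>, M \<omega>)) \<in> measurable P (borel \<Otimes>\<^sub>M borel)" by measurable
  have dist: "distr P (borel \<Otimes>\<^sub>M borel) (X i) = distr P (borel \<Otimes>\<^sub>M borel) (\<lambda>\<omega>. (Q \<omega>, M \<omega>))" if "i \<ge> 1" for i
    using ident[OF that] by (simp add: X_def[abs_def])
  have transf: "(\<integral>\<omega>. g (X i \<omega>) \<partial>P) = (\<integral>\<omega>. g (Q \<omega>, M \<omega>) \<partial>P)"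
    if "i \<ge> 1" "g \<in> borel_measurable (borel \<Otimes>\<^sub>M borel)" for i and g :: "real \<times> real \<Rightarrow> complex"
  proof -
    have "(\<integral>\<omega>. g (X i \<omega>) \<partial>P) = integral\<^sup>L (distr P (borel \<Otimes>\<^sub>M borel) (X i)) g"
      by (rule integral_distr[symmetric, OF Xm[OF that(1)] that(2)])
    also have "\<dots> = integral\<^sup>L (distr P (borel \<Otimes>\<^sub>M borel) (\<lambda>\<omega>. (Q \<omega>, M \<omega>))) g" by (subst dist[OF that(1)]) (rule refl)
    also have "\<dots> = (\<integral>\<omega>. g (Q \<omega>, M \<omega>) \<partial>P)" by (rule integral_distr[OF QMm that(2)])
    finally show ?thesis .
  qed
  have setpm: "{x \<in> space (borel \<Otimes>\<^sub>M borel). snd x = (1::real) \<or> snd x = -1} \<in> sets (borel \<Otimes>\<^sub>M borel :: (real \<times> real) measure)"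
    by measurable
  have pmX: "AE \<omega> in P. snd (X i \<omega>) = 1 \<or> snd (X i \<omega>) = -1" if "i \<ge> 1" for i
  proof -
    have "AE z in distr P (borel \<Otimes>\<^sub>M borel) (\<lambda>\<omega>. (Q \<omega>, M \<omega>)). snd z = 1 \<or> snd z = -1"
      unfolding AE_distr_iff[OF QMm setpm] using M_pm1 by (auto elim!: eventually_mono)
    then have "AE z in distr P (borel \<Otimes>\<^sub>M borel) (X i). snd z = 1 \<or> snd z = -1"
      by (subst dist[OF that]) assumption
    then show ?thesis unfolding AE_distr_iff[OF Xm[OF that] setpm] .
  qed
  have Qi: "integrable P Q" using square_integrable_imp_integrable[OF Qm Q2] .
  have Mb: "AE x in P. norm (M x) \<le> 1" using M_pm1 by eventually_elim auto
  have Mi: "integrable P M" by (rule integrable_const_bound[OF Mb Mm])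
  have QMi: "integrable P (\<lambda>x. Q x * M x)"
    by (rule Bochner_Integration.integrable_bound[OF Qi]) (use M_pm1 in \<open>auto elim!: eventually_mono\<close>)
  define mu where "mu = (\<integral>x. M x \<partial>P)"
  have mu1: "mu \<noteq> 1"
  proof
    assume "mu = 1"
    then have "(\<integral>x. 1 - M x \<partial>P) = 0" using Mi by (simp add: mu_def prob_space)
    moreover have "integrable P (\<lambda>x. 1 - M x)" using Mi by simp
    moreover have "AE x in P. 0 \<le> 1 - M x" using M_pm1 by eventually_elim auto
    ultimately have "AE x in P. 1 - M x = 0" using integral_nonneg_eq_0_iff_AE by blast
    then have "AE x in P. M x = 1" by eventually_elim simp
    then show False using M_nondeg by blast
  qed
  define c where "c = (\<integral>x. Q x \<partial>P) / (1 - mu)"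
  have c_eq: "c * (1 - mu) = (\<integral>x. Q x \<partial>P)" using mu1 by (simp add: c_def)
  define W where "W \<omega> = wfun c (Q \<omega>, M \<omega>)" for \<omega>
  have W_fun: "W = (\<lambda>\<omega>. Q \<omega> - c + c * M \<omega>)" by (simp add: fun_eq_iff W_def wfun_def algebra_simps)
  have Wm[measurable]: "W \<in> borel_measurable P" unfolding W_fun by measurable
  have Wi: "integrable P W" unfolding W_fun using Qi Mi by simp
  have EW: "(\<integral>\<omega>. W \<omega> \<partial>P) = 0"
    unfolding W_fun using Qi Mi c_eq by (simp add: prob_space mu_def algebra_simps)
  have W2_ae: "AE \<omega> in P. (\<lambda>\<omega>. (Q \<omega>)\<^sup>2 + 2*c*(Q \<omega> * M \<omega>) + (2*c\<^sup>2 - 2*c*Q \<omega> - 2*c\<^sup>2*M \<omega>)) \<omega> = (W \<omega>)\<^sup>2"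
    using M_pm1 by eventually_elim (auto simp: W_fun power2_eq_square algebra_simps)
  have rhs_int: "integrable P (\<lambda>\<omega>. (Q \<omega>)\<^sup>2 + 2*c*(Q \<omega> * M \<omega>) + (2*c\<^sup>2 - 2*c*Q \<omega> - 2*c\<^sup>2*M \<omega>))"
    using Q2 QMi Qi Mi by simp
  have W2i: "integrable P (\<lambda>\<omega>. (W \<omega>)\<^sup>2)"
    by (rule integrable_cong_AE_imp[OF rhs_int _ W2_ae]) simp
  define sig where "sig = (\<integral>\<omega>. (W \<omega>)\<^sup>2 \<partial>P)"
  have sig_eq: "sig = (\<integral>x. (Q x)\<^sup>2 \<partial>P) + 2 * (\<integral>x. Q x \<partial>P) / (1 - (\<integral>x. M x \<partial>P)) * (\<integral>x. Q x * M x \<partial>P)"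
  proof -
    have "sig = (\<integral>\<omega>. (Q \<omega>)\<^sup>2 + 2*c*(Q \<omega> * M \<omega>) + (2*c\<^sup>2 - 2*c*Q \<omega> - 2*c\<^sup>2*M \<omega>) \<partial>P)"
      unfolding sig_def by (rule integral_cong_AE[symmetric]) (use W2_ae in auto)
    also have "\<dots> = (\<integral>x. (Q x)\<^sup>2 \<partial>P) + 2*c*(\<integral>x. Q x * M x \<partial>P) + (2*c\<^sup>2 - 2*c*(\<integral>x. Q x \<partial>P) - 2*c\<^sup>2*mu)"
      using Q2 QMi Qi Mi by (simp add: prob_space mu_def)
    also have "2*c\<^sup>2 - 2*c*(\<integral>x. Q x \<partial>P) - 2*c\<^sup>2*mu = 2 * c * (c * (1 - mu) - (\<integral>x. Q x \<partial>P))"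
      by (simp add: power2_eq_square algebra_simps)
    also have "\<dots> = 0" using c_eq by simp
    finally show ?thesis by (simp add: c_def mu_def)
  qed
  have sig0: "0 \<le> sig" unfolding sig_def by simp
  have varW: "(\<integral>\<omega>. (W \<omega> - (\<integral>\<omega>. W \<omega> \<partial>P))\<^sup>2 \<partial>P) = sig" by (simp add: EW sig_def)
  define e where "e u = u\<^sup>2 / 6 * (\<integral>\<omega>. min (6 * (W \<omega>)\<^sup>2) (\<bar>u\<bar> * \<bar>W \<omega>\<bar> ^ 3) \<partial>P)" for u
  have approx: "norm ((\<integral>\<omega>. iexp (u * W \<omega>) \<partial>P) - complex_of_real (1 - u\<^sup>2 * sig / 2)) \<le> e u" for u
  proof -
    have "char (distr P borel W) u = (\<integral>\<omega>. iexp (u * W \<omega>) \<partial>P)" by (simp add: char_def integral_distr)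
    with char_approx3'[OF Wm Wi W2i EW varW refl, of u] show ?thesis by (simp add: e_def)
  qed
  have e_neg: "e (- u) = e u" for u by (simp add: e_def)
  have ch_W: "(\<integral>\<omega>. iexp (u * wfun c (X i \<omega>)) \<partial>P) = (\<integral>\<omega>. iexp (u * W \<omega>) \<partial>P)" if "i \<ge> 1" for i u
    unfolding W_def by (rule transf[OF that]) (simp add: wfun_def)
  have tele: "norm ((\<integral>\<omega>. iexp (s * Vf c n 1 (\<lambda>i. X i \<omega>)) \<partial>P) - complex_of_real (1 - s\<^sup>2 * sig / 2) ^ n) \<le> n * e s"
    if "\<bar>1 - s\<^sup>2 * sig / 2\<bar> \<le> 1" for s n
  proof (rule telescope[where j=1 and d=n and n=n])
    show "prob_space P" by fact
    show "indep_vars (\<lambda>_. borel \<Otimes>\<^sub>M borel) X {1..}" by (rule indX)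
    show "AE \<omega> in P. snd (X i \<omega>) = 1 \<or> snd (X i \<omega>) = - 1" if "1 \<le> i" for i using pmX that .
    show "norm ((\<integral>\<omega>. iexp (s * wfun c (X i \<omega>)) \<partial>P) - complex_of_real (1 - s\<^sup>2 * sig / 2)) \<le> e s" if "1 \<le> i" for i
      using approx[of s] ch_W[OF that] by simp
    show "norm ((\<integral>\<omega>. iexp (- s * wfun c (X i \<omega>)) \<partial>P) - complex_of_real (1 - s\<^sup>2 * sig / 2)) \<le> e s" if "1 \<le> i" for i
      using approx[of "-s"] ch_W[OF that, of "-s"] e_neg[of s] by simp
    show "norm (complex_of_real (1 - s\<^sup>2 * sig / 2)) \<le> 1" using that by (simp only: norm_of_real)
  qed simp_all
  define beta where "beta = sqrt ((\<integral>x. (Q x)\<^sup>2 \<partial>P)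
              + 2 * (\<integral>x. Q x \<partial>P) / (1 - (\<integral>x. M x \<partial>P)) * (\<integral>x. Q x * M x \<partial>P))"
  have beta2: "beta\<^sup>2 = sig" unfolding beta_def sig_eq[symmetric] using sig0 by simp
  have Rm: "(\<lambda>x. perp_R Qs Ms n x) \<in> borel_measurable P" for n
    using perp_meas[of Qs P Ms n] Qsm Msm by simp
  have Rm': "(\<lambda>x. perp_R Qs Ms n x / sqrt (real n)) \<in> borel_measurable P" for n
    using Rm[of n] by simp
  interpret N: real_distribution "density lborel std_normal_density" by (rule real_dist_normal_dist)
  have charN: "char (scaled_std_normal beta) t = complex_of_real (exp (- (sig * t\<^sup>2) / 2))" for t
  proof -
    have "char (scaled_std_normal beta) t = char (density lborel std_normal_density) (t * beta)"
      unfolding scaled_std_normal_def char_def by (subst integral_distr) (simp_all add: mult.assoc)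
    also have "\<dots> = complex_of_real (exp (- ((t * beta)\<^sup>2) / 2))" by (simp add: char_std_normal_distribution)
    also have "(t * beta)\<^sup>2 = sig * t\<^sup>2" using beta2 by (simp add: power_mult_distrib)
    finally show ?thesis .
  qed
  have lim_div: "(\<lambda>n. a / sqrt (real n)) \<longlonglongrightarrow> 0" for a :: real by real_asymp
  show ?thesis
    unfolding beta_def[symmetric]
  proof (rule levy_continuity)
    show "real_distribution (distr P borel (\<lambda>x. perp_R Qs Ms n x / sqrt (real n)))" for n
      by (rule real_distribution_distr[OF Rm'])
    show "real_distribution (scaled_std_normal beta)" unfolding scaled_std_normal_def
      by (rule N.real_distribution_distr) simp
    fix t :: real
    define ch where "ch n = char (distr P borel (\<lambda>x. perp_R Qs Ms n x / sqrt (real n))) t" for n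
    define ps where "ps n = 1 + (- (sig * t\<^sup>2) / 2) / real n" for n
    define g where "g n = 2 * \<bar>c\<bar> * (\<bar>t\<bar> / sqrt (real n)) + t\<^sup>2 / 6 * (\<integral>\<omega>. min (6 * (W \<omega>)\<^sup>2) (\<bar>t\<bar> / sqrt (real n) * \<bar>W \<omega>\<bar> ^ 3) \<partial>P)" for n
    have bound: "\<forall>\<^sub>F n in sequentially. norm (ch n - complex_of_real (ps n) ^ n) \<le> g n"
    proof (rule eventually_sequentiallyI[of "max 1 (nat \<lceil>sig * t\<^sup>2 / 4\<rceil>)"])
      fix n assume n: "max 1 (nat \<lceil>sig * t\<^sup>2 / 4\<rceil>) \<le> n"
      then have n1: "1 \<le> n" by simp
      have "sig * t\<^sup>2 / 4 \<le> real (nat \<lceil>sig * t\<^sup>2 / 4\<rceil>)" by (rule real_nat_ceiling_ge)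
      also have "\<dots> \<le> real n" using n by simp
      finally have n2: "sig * t\<^sup>2 / 4 \<le> real n" .
      define s where "s = t / sqrt (real n)"
      have s2: "s\<^sup>2 = t\<^sup>2 / real n" using n1 by (simp add: s_def power_divide)
      have ps_eq: "ps n = 1 - s\<^sup>2 * sig / 2" using n1 by (simp add: ps_def s2 field_simps)
      have psb: "\<bar>1 - s\<^sup>2 * sig / 2\<bar> \<le> 1"
      proof -
        have "0 \<le> s\<^sup>2 * sig" using sig0 by simp
        moreover have "s\<^sup>2 * sig \<le> 4" using n1 n2 by (simp add: s2 field_simps)
        ultimately show ?thesis by simp
      qed
      have T: "norm ((\<integral>\<omega>. iexp (s * Vf c n 1 (\<lambda>i. X i \<omega>)) \<partial>P) - complex_of_real (ps n) ^ n) \<le> n * e s"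
        using tele[OF psb, of n] by (simp add: ps_eq)
      have ch_eq: "ch n = (\<integral>\<omega>. iexp (s * perp_R Qs Ms n \<omega>) \<partial>P)"
      proof -
        have "ch n = (\<integral>\<omega>. iexp (t * (perp_R Qs Ms n \<omega> / sqrt (real n))) \<partial>P)"
          unfolding ch_def char_def by (rule integral_distr[OF Rm']) simp
        also have "\<dots> = (\<integral>\<omega>. iexp (s * perp_R Qs Ms n \<omega>) \<partial>P)"
          by (simp add: s_def)
        finally show ?thesis .
      qed
      define Pi where "Pi \<omega> = (\<Prod>i\<in>{1..n}. Ms i \<omega>)" for \<omega>
      have Pim: "Pi \<in> borel_measurable P" unfolding Pi_def
        by (rule borel_measurable_prod) (use Msm in auto)
      have Veq: "Vf c n 1 (\<lambda>i. X i \<omega>) = perp_R Qs Ms n \<omega> - c * (1 - Pi \<omega>)" for \<omega>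
        using perp_Vf[of Qs Ms n \<omega> c] by (simp add: X_def Pi_def)
      have AEP: "AE \<omega> in P. Pi \<omega> = 1 \<or> Pi \<omega> = -1"
      proof -
        have "AE \<omega> in P. \<forall>i\<in>{1..n}. snd (X i \<omega>) = 1 \<or> snd (X i \<omega>) = -1"
          by (rule eventually_ball_finite) (use pmX in auto)
        then show ?thesis
          apply eventually_elim unfolding Pi_def by (rule prod_pm1) (auto simp: X_def)
      qed
      have diffb: "norm ((\<integral>\<omega>. iexp (s * perp_R Qs Ms n \<omega>) \<partial>P) - (\<integral>\<omega>. iexp (s * Vf c n 1 (\<lambda>i. X i \<omega>)) \<partial>P)) \<le> 2 * \<bar>c\<bar> * \<bar>s\<bar>"
      proof -
        have m1: "(\<lambda>\<omega>. iexp (s * perp_R Qs Ms n \<omega>)) \<in> borel_measurable P" using Rm[of n] by measurable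
        have m2: "(\<lambda>\<omega>. iexp (s * (perp_R Qs Ms n \<omega> - c * (1 - Pi \<omega>)))) \<in> borel_measurable P"
          using Rm[of n] Pim by measurable
        have i1: "integrable P (\<lambda>\<omega>. iexp (s * perp_R Qs Ms n \<omega>))"
          by (rule integrable_const_bound[where B=1, OF _ m1]) simp
        have i2: "integrable P (\<lambda>\<omega>. iexp (s * (perp_R Qs Ms n \<omega> - c * (1 - Pi \<omega>))))"
          by (rule integrable_const_bound[where B=1, OF _ m2]) simp
        have "norm ((\<integral>\<omega>. iexp (s * perp_R Qs Ms n \<omega>) \<partial>P) - (\<integral>\<omega>. iexp (s * (perp_R Qs Ms n \<omega> - c * (1 - Pi \<omega>))) \<partial>P))
            = norm (\<integral>\<omega>. iexp (s * perp_R Qs Ms n \<omega>) - iexp (s * (perp_R Qs Ms n \<omega> - c * (1 - Pi \<omega>))) \<partial>P)"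
          using i1 i2 by simp
        also have "\<dots> \<le> (\<integral>\<omega>. norm (iexp (s * perp_R Qs Ms n \<omega>) - iexp (s * (perp_R Qs Ms n \<omega> - c * (1 - Pi \<omega>)))) \<partial>P)"
          by (rule integral_norm_bound)
        also have "\<dots> \<le> (\<integral>\<omega>. 2 * \<bar>c\<bar> * \<bar>s\<bar> \<partial>P)"
        proof (rule integral_mono_AE)
          show "integrable P (\<lambda>\<omega>. norm (iexp (s * perp_R Qs Ms n \<omega>) - iexp (s * (perp_R Qs Ms n \<omega> - c * (1 - Pi \<omega>)))))"
            using i1 i2 by simp
          show "integrable P (\<lambda>\<omega>. 2 * \<bar>c\<bar> * \<bar>s\<bar>)" by simp
          show "AE \<omega> in P. norm (iexp (s * perp_R Qs Ms n \<omega>) - iexp (s * (perp_R Qs Ms n \<omega> - c * (1 - Pi \<omega>)))) \<le> 2 * \<bar>c\<bar> * \<bar>s\<bar>"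
            using AEP
          proof eventually_elim
            case (elim \<omega>)
            have "norm (iexp (s * perp_R Qs Ms n \<omega>) - iexp (s * (perp_R Qs Ms n \<omega> - c * (1 - Pi \<omega>))))
                 \<le> \<bar>s * perp_R Qs Ms n \<omega> - s * (perp_R Qs Ms n \<omega> - c * (1 - Pi \<omega>))\<bar>"
              by (rule iexp_diff_bound)
            also have "\<dots> = \<bar>s * c * (1 - Pi \<omega>)\<bar>" by (simp add: algebra_simps)
            also have "\<dots> = \<bar>s\<bar> * \<bar>c\<bar> * \<bar>1 - Pi \<omega>\<bar>" by (simp only: abs_mult)
            also have "\<dots> \<le> \<bar>s\<bar> * \<bar>c\<bar> * 2"
              by (rule mult_left_mono) (use elim in auto)
            finally show ?case by (simp add: algebra_simps)
          qed
        qed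
        also have "\<dots> = 2 * \<bar>c\<bar> * \<bar>s\<bar>" by (simp add: prob_space)
        finally show ?thesis unfolding Veq .
      qed
      have ne: "real n * e s = t\<^sup>2 / 6 * (\<integral>\<omega>. min (6 * (W \<omega>)\<^sup>2) (\<bar>t\<bar> / sqrt (real n) * \<bar>W \<omega>\<bar> ^ 3) \<partial>P)"
      proof -
        have ns: "real n * s\<^sup>2 = t\<^sup>2" using n1 by (simp add: s2)
        have as: "\<bar>s\<bar> = \<bar>t\<bar> / sqrt (real n)" by (simp add: s_def abs_div)
        have "real n * e s = (real n * s\<^sup>2) / 6 * (\<integral>\<omega>. min (6 * (W \<omega>)\<^sup>2) (\<bar>s\<bar> * \<bar>W \<omega>\<bar> ^ 3) \<partial>P)"
          by (simp add: e_def)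
        then show ?thesis unfolding ns as .
      qed
      have "norm (ch n - complex_of_real (ps n) ^ n)
          \<le> norm ((\<integral>\<omega>. iexp (s * perp_R Qs Ms n \<omega>) \<partial>P) - (\<integral>\<omega>. iexp (s * Vf c n 1 (\<lambda>i. X i \<omega>)) \<partial>P))
            + norm ((\<integral>\<omega>. iexp (s * Vf c n 1 (\<lambda>i. X i \<omega>)) \<partial>P) - complex_of_real (ps n) ^ n)"
        unfolding ch_eq by (rule norm_diff_triangle_ineq[THEN order.trans[rotated]]) simp
      also have "\<dots> \<le> 2 * \<bar>c\<bar> * \<bar>s\<bar> + n * e s" by (rule add_mono[OF diffb T])
      also have "\<dots> = g n" unfolding g_def ne[symmetric] by (simp add: s_def abs_div)
      finally show "norm (ch n - complex_of_real (ps n) ^ n) \<le> g n" .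
    qed
    have g0: "g \<longlonglongrightarrow> 0"
    proof -
      have pt: "(\<lambda>n. min (6 * (W \<omega>)\<^sup>2) (\<bar>t\<bar> / sqrt (real n) * \<bar>W \<omega>\<bar> ^ 3)) \<longlonglongrightarrow> 0" for \<omega>
      proof -
        have "(\<lambda>n. \<bar>t\<bar> * \<bar>W \<omega>\<bar> ^ 3 / sqrt (real n)) \<longlonglongrightarrow> 0" by (rule lim_div)
        then have "(\<lambda>n. min (6 * (W \<omega>)\<^sup>2) (\<bar>t\<bar> * \<bar>W \<omega>\<bar> ^ 3 / sqrt (real n))) \<longlonglongrightarrow> min (6 * (W \<omega>)\<^sup>2) 0"
          by (intro tendsto_min tendsto_const)
        then show ?thesis by simp
      qed
      have "(\<lambda>n. \<integral>\<omega>. min (6 * (W \<omega>)\<^sup>2) (\<bar>t\<bar> / sqrt (real n) * \<bar>W \<omega>\<bar> ^ 3) \<partial>P) \<longlonglongrightarrow> (\<integral>\<omega>. 0 \<partial>P)"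
        by (rule integral_dominated_convergence[where w="\<lambda>\<omega>. 6 * (W \<omega>)\<^sup>2"]) (use W2i pt in auto)
      then have I: "(\<lambda>n. t\<^sup>2 / 6 * (\<integral>\<omega>. min (6 * (W \<omega>)\<^sup>2) (\<bar>t\<bar> / sqrt (real n) * \<bar>W \<omega>\<bar> ^ 3) \<partial>P)) \<longlonglongrightarrow> 0"
        by (simp add: tendsto_mult_right_zero)
      have "(\<lambda>n. 2 * \<bar>c\<bar> * (\<bar>t\<bar> / sqrt (real n))) \<longlonglongrightarrow> 0"
        using lim_div[of "2 * \<bar>c\<bar> * \<bar>t\<bar>"] by simp
      from tendsto_add[OF this I] show ?thesis by (simp add: g_def[abs_def])
    qed
    have ps_lim: "(\<lambda>n. complex_of_real (ps n) ^ n) \<longlonglongrightarrow> complex_of_real (exp (- (sig * t\<^sup>2) / 2))"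
    proof -
      have "(\<lambda>n. ps n ^ n) \<longlonglongrightarrow> exp (- (sig * t\<^sup>2) / 2)"
        unfolding ps_def by (rule tendsto_exp_limit_sequentially)
      then have "(\<lambda>n. complex_of_real (ps n ^ n)) \<longlonglongrightarrow> complex_of_real (exp (- (sig * t\<^sup>2) / 2))"
        by (rule tendsto_of_real)
      then show ?thesis by simp
    qed
    have "ch \<longlonglongrightarrow> complex_of_real (exp (- (sig * t\<^sup>2) / 2))"
      by (rule Lim_transform[OF ps_lim Lim_null_comparison[OF bound g0]])
    then show "(\<lambda>n. char (distr P borel (\<lambda>x. perp_R Qs Ms n x / sqrt (real n))) t) \<longlonglongrightarrow> char (scaled_std_normal beta) t"
      by (simp add: ch_def[abs_def] charN)
  qed
qed
end
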